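(* Let $N, M \in \mathbb{Z}^{+}$. Let $(\mathbf{a},\mathbf{b})$ be a Golay complementary pair of length $N$ and let $(\mathbf{c},\mathbf{d})$ be a Golay complementary pair of length $M$, all with complex entries. Let $\xi_1,\xi_2 \in \mathbb{C}$ with $|\xi_1| = |\xi_2| = 1$, and let $k, l, m \in \mathbb{Z}$. Define the sequences $\mathbf{f}$ and $\mathbf{g}$ through their polynomial representations $$p_{\mathbf{f}}(z) = \xi_1\, p_{\mathbf{a}}(z^k)\, p_{\mathbf{c}}(z^l) + \xi_2\, p_{\mathbf{b}}(z^k)\, p_{\mathbf{d}}(z^l)\, z^{m},$$ $$p_{\mathbf{g}}(z) = \xi_1\, p_{\mathbf{a}}(z^k)\, p_{\tilde{\mathbf{d}}}(z^l) - \xi_2\, p_{\mathbf{b}}(z^k)\, p_{\tilde{\mathbf{c}}}(z^l)\, z^{m}.$$ Then $(\mathbf{f},\mathbf{g})$ is a Golay complementary pair.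
   Context: For a sequence $\mathbf{a} = (a_0, a_1, \dots, a_{N-1})$ of complex numbers, its polynomial representation is $p_{\mathbf{a}}(z) = a_{N-1}z^{N-1} + \dots + a_1 z + a_0$ for $z \in \mathbb{C}$ (nonzero when negative powers occur). More generally, a finitely supported complex sequence $(x_i)_{i\in\mathbb{Z}}$ is identified with the Laurent polynomial $p_{\mathbf{x}}(z)=\sum_i x_i z^i$; when $k,l,m$ may be negative, $\mathbf{f}$ and $\mathbf{g}$ denote the (finitely supported, $\mathbb{Z}$-indexed) coefficient sequences of the Laurent polynomials above. For a sequence $\mathbf{a}=(a_0,\dots,a_{N-1})$, $\tilde{\mathbf{a}} = (a_{N-1}^*, a_{N-2}^*, \dots, a_0^* )$ denotes the sequence reversed in order and element-wise complex conjugated. The aperiodic autocorrelation of a finitely supported sequence $\mathbf{x}$ is $\rho_{\mathbf{x}}(j) = \sum_{i} x_i^* x_{i+j}$ for $j\in\mathbb{Z}$ (for a sequence of length $N$ indexed $0,\dots,N-1$ this is $\sum_{i=0}^{N-j-1} a_i^* a_{i+j}$ for $0\le j\le N-1$, $\rho_{\mathbf{a}}(-j)=\rho_{\mathbf{a}}(j)^*$, and $0$ otherwise). A pair of sequences $(\mathbf{x},\mathbf{y})$ is a Golay complementary pair if $\rho_{\mathbf{x}}(j) + \rho_{\mathbf{y}}(j) = 0$ for all $j \neq 0$; equivalently, $|p_{\mathbf{x}}(z)|^2 + |p_{\mathbf{y}}(z)|^2$ is constant for all $z$ on the unit circle. A Golay complementary pair "of length $N$" consists of two sequences each of length $N$.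 *)

theory Defs
  imports Complex_Main
begin

definition supp_seq :: "(int \<Rightarrow> complex) \<Rightarrow> int set" where
  "supp_seq x = {i. x i \<noteq> 0}"

definition fin_supp :: "(int \<Rightarrow> complex) \<Rightarrow> bool" where
  "fin_supp x \<longleftrightarrow> finite (supp_seq x)"

definition lpoly :: "(int \<Rightarrow> complex) \<Rightarrow> complex \<Rightarrow> complex" where
  "lpoly x z = (\<Sum>i\<in>supp_seq x. x i * z powi i)"

definition acorr :: "(int \<Rightarrow> complex) \<Rightarrow> int \<Rightarrow> complex" where
  "acorr x j = (\<Sum>i\<in>supp_seq x. cnj (x i) * x (i + j))"

definition golay_pair :: "(int \<Rightarrow> complex) \<Rightarrow> (int \<Rightarrow> complex) \<Rightarrow> bool" where
  "golay_pair x y \<longleftrightarrow> (\<forall>j. j \<noteq> 0 \<longrightarrow> acorr x j + acorr y j = 0)"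

text \<open>A length-N sequence (a_0,...,a_(N-1)) given by a :: nat => complex
  (only the entries below N matter), viewed as a Z-indexed sequence.\<close>
definition seq_of :: "nat \<Rightarrow> (nat \<Rightarrow> complex) \<Rightarrow> int \<Rightarrow> complex" where
  "seq_of N a = (\<lambda>i. if 0 \<le> i \<and> i < int N then a (nat i) else 0)"

definition pseq :: "nat \<Rightarrow> (nat \<Rightarrow> complex) \<Rightarrow> complex \<Rightarrow> complex" where
  "pseq N a z = (\<Sum>i<N. a i * z ^ i)"

definition rev_cnj :: "nat \<Rightarrow> (nat \<Rightarrow> complex) \<Rightarrow> nat \<Rightarrow> complex" where
  "rev_cnj N a = (\<lambda>i. cnj (a (N - 1 - i)))"

end

theory Submission
  imports Defs "HOL-Computational_Algebra.Polynomial" "HOL-Library.Infinite_Set"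
begin

lemma lpoly_U: "finite U \<Longrightarrow> supp_seq x \<subseteq> U \<Longrightarrow> lpoly x z = (\<Sum>i\<in>U. x i * z powi i)"
  unfolding lpoly_def by (rule sum.mono_neutral_left) (auto simp: supp_seq_def)

lemma acorr_U: "finite U \<Longrightarrow> supp_seq x \<subseteq> U \<Longrightarrow> acorr x j = (\<Sum>i\<in>U. cnj (x i) * x (i + j))"
  unfolding acorr_def by (rule sum.mono_neutral_left) (auto simp: supp_seq_def)

lemma unit_cnj_powi: assumes "cmod z = 1" shows "cnj (z powi i) * z powi i' = z powi (i' - i)"
proof -
  have z0: "z \<noteq> 0" using assms by auto
  have n: "cmod (z powi i) = 1" using assms by (simp add: norm_power_int)
  have "cnj (z powi i) * z powi i = 1"
    using complex_norm_square[of "z powi i"] n by (simp add: mult.commute)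
  hence "cnj (z powi i) = inverse (z powi i)" using z0
    by (metis inverse_unique mult.commute)
  thus ?thesis using z0 by (simp add: power_int_diff field_simps)
qed

lemma L1:
  assumes sup: "supp_seq x \<subseteq> {-K..K}" and z: "cmod z = 1"
  shows "cnj (lpoly x z) * lpoly x z = (\<Sum>j\<in>{-2*K..2*K}. acorr x j * z powi j)"
proof -
  define U where "U = {-K..K}"
  define D where "D = {-2*K..2*K}"
  have fU: "finite U" by (simp add: U_def)
  have sU: "supp_seq x \<subseteq> U" using sup U_def by simp
  have out: "x i = 0" if "i \<notin> U" for i using sU that by (auto simp: supp_seq_def)
  have "cnj (lpoly x z) * lpoly x z = (\<Sum>i\<in>U. cnj (x i) * cnj (z powi i)) * (\<Sum>i'\<in>U. x i' * z powi i')"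
    by (simp add: lpoly_U[OF fU sU])
  also have "\<dots> = (\<Sum>i\<in>U. \<Sum>i'\<in>U. cnj (x i) * x i' * z powi (i' - i))"
    by (simp only: sum_product) (intro sum.cong refl, simp only: unit_cnj_powi[OF z, symmetric], simp only: mult_ac)
  also have "\<dots> = (\<Sum>i\<in>U. \<Sum>j\<in>D. cnj (x i) * x (i + j) * z powi j)"
  proof (rule sum.cong[OF refl])
    fix i assume iU: "i \<in> U"
    have inj: "inj_on (\<lambda>i'. i' - i) U" by (auto simp: inj_on_def)
    have "(\<Sum>i'\<in>U. cnj (x i) * x i' * z powi (i' - i)) = (\<Sum>j\<in>(\<lambda>i'. i' - i) ` U. cnj (x i) * x (i + j) * z powi j)"
      by (simp add: sum.reindex[OF inj])
    also have "\<dots> = (\<Sum>j\<in>D. cnj (x i) * x (i + j) * z powi j)"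
    proof (rule sum.mono_neutral_left)
      show "finite D" by (simp add: D_def)
      show "(\<lambda>i'. i' - i) ` U \<subseteq> D" using iU by (auto simp: U_def D_def)
      show "\<forall>j\<in>D - (\<lambda>i'. i' - i) ` U. cnj (x i) * x (i + j) * z powi j = 0"
      proof
        fix j assume "j \<in> D - (\<lambda>i'. i' - i) ` U"
        hence "i + j \<notin> U" by (force simp: image_iff)
        thus "cnj (x i) * x (i + j) * z powi j = 0" using out by simp
      qed
    qed
    finally show "(\<Sum>i'\<in>U. cnj (x i) * x i' * z powi (i' - i)) = (\<Sum>j\<in>D. cnj (x i) * x (i + j) * z powi j)" .
  qed
  also have "\<dots> = (\<Sum>j\<in>D. (\<Sum>i\<in>U. cnj (x i) * x (i + j)) * z powi j)"
    by (subst sum.swap) (simp add: sum_distrib_right)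
  also have "\<dots> = (\<Sum>j\<in>D. acorr x j * z powi j)"
    by (simp add: acorr_U[OF fU sU])
  finally show ?thesis by (simp add: D_def)
qed

lemma acorr_out:
  assumes sup: "supp_seq x \<subseteq> {-K..K}" and j: "j \<notin> {-2*K..2*K}"
  shows "acorr x j = 0"
proof -
  have "acorr x j = (\<Sum>i\<in>{-K..K}. cnj (x i) * x (i + j))" by (rule acorr_U[OF _ sup]) simp
  also have "\<dots> = 0"
  proof (rule sum.neutral, rule ballI)
    fix i assume i: "i \<in> {-K..K}"
    hence "i + j \<notin> {-K..K}" using j by auto
    hence "x (i + j) = 0" using sup by (auto simp: supp_seq_def)
    thus "cnj (x i) * x (i + j) = 0" by simp
  qed
  finally show ?thesis .
qed

lemma circle_infinite: "infinite {z::complex. cmod z = 1}"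
proof
  assume fin: "finite {z::complex. cmod z = 1}"
  define h where "h = (\<lambda>n::nat. Complex (1/(n+1)) (sqrt (1 - (1/(n+1))^2)))"
  have "inj h" unfolding h_def inj_def by auto
  moreover have "range h \<subseteq> {z. cmod z = 1}"
  proof
    fix w assume "w \<in> range h"
    then obtain n where w: "w = h n" by auto
    have le: "(1/(real n+1))^2 \<le> 1" by (simp add: power_le_one)
    show "w \<in> {z. cmod z = 1}" using le by (simp add: w h_def cmod_def)
  qed
  ultimately have "finite (range h)" using fin finite_subset by blast
  with \<open>inj h\<close> show False using finite_imageD infinite_UNIV_nat by blast
qed

lemma unique_coeffs:
  fixes c :: "int \<Rightarrow> complex" and K :: int
  assumes h: "\<forall>z. cmod z = 1 \<longrightarrow> (\<Sum>j\<in>{-K..K}. c j * z powi j) = 0" and j0: "j0 \<in> {-K..K}"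
  shows "c j0 = 0"
proof -
  define p where "p = (\<Sum>j\<in>{-K..K}. monom (c j) (nat (j + K)))"
  have "poly p z = 0" if z: "cmod z = 1" for z
  proof -
    have z0: "z \<noteq> 0" using z by auto
    have "poly p z = (\<Sum>j\<in>{-K..K}. c j * z ^ nat (j + K))" by (simp add: p_def poly_sum poly_monom)
    also have "\<dots> = (\<Sum>j\<in>{-K..K}. z powi K * (c j * z powi j))"
    proof (rule sum.cong[OF refl])
      fix j assume "j \<in> {-K..K}"
      hence "z ^ nat (j + K) = z powi (j + K)" by (metis power_int_of_nat nat_0_le atLeastAtMost_iff add.commute le_minus_iff diff_ge_0_iff_ge diff_minus_eq_add)
      thus "c j * z ^ nat (j + K) = z powi K * (c j * z powi j)" using z0 by (simp add: power_int_add mult_ac)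
    qed
    also have "\<dots> = z powi K * (\<Sum>j\<in>{-K..K}. c j * z powi j)" by (simp add: sum_distrib_left)
    also have "\<dots> = 0" using h z by simp
    finally show ?thesis .
  qed
  hence "p = 0" using poly_roots_finite[of p] circle_infinite
    by (metis (mono_tags, lifting) finite_subset mem_Collect_eq subsetI)
  hence "0 = coeff p (nat (j0 + K))" by simp
  also have "\<dots> = (\<Sum>j\<in>{-K..K}. if j = j0 then c j else 0)"
    unfolding p_def coeff_sum coeff_monom
    by (rule sum.cong[OF refl]) (use j0 in auto)
  also have "\<dots> = c j0" using j0 by simp
  finally show ?thesis by simp
qed


lemma unit_cnj: "cmod z = 1 \<Longrightarrow> cnj z * z = 1"
  using complex_norm_square[of z] by (simp add: mult.commute)

lemma alg:
  fixes x1 x2 u v A B C D :: complex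
  assumes "cnj x1 * x1 = 1" "cnj x2 * x2 = 1" "cnj u * u = 1" "cnj v * v = 1"
  shows "cnj (x1*A*C + x2*B*D*u) * (x1*A*C + x2*B*D*u)
    + cnj (x1*A*(v*cnj D) - x2*B*(v*cnj C)*u) * (x1*A*(v*cnj D) - x2*B*(v*cnj C)*u)
    = (cnj A*A + cnj B*B)*(cnj C*C+cnj D*D)"
proof -
  show ?thesis using assms
    by simp algebra
qed

lemma seq_of_supp: "supp_seq (seq_of N a) \<subseteq> {- int N..int N}"
  by (auto simp: supp_seq_def seq_of_def split: if_splits)

lemma pseq_lpoly: "lpoly (seq_of N a) z = pseq N a z"
proof -
  have "lpoly (seq_of N a) z = (\<Sum>i\<in>{0..<int N}. seq_of N a i * z powi i)"
    by (rule lpoly_U) (auto simp: supp_seq_def seq_of_def split: if_splits)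
  also have "\<dots> = (\<Sum>i\<in>int ` {..<N}. seq_of N a i * z powi i)"
    by (rule sum.cong) (auto simp: image_iff, rule_tac x="nat x" in bexI, auto)
  also have "\<dots> = pseq N a z"
    by (subst sum.reindex) (auto simp: pseq_def seq_of_def)
  finally show ?thesis .
qed

lemma golay_const:
  assumes "golay_pair (seq_of N a) (seq_of N b)" and u: "cmod u = 1"
  shows "cnj (pseq N a u) * pseq N a u + cnj (pseq N b u) * pseq N b u
     = acorr (seq_of N a) 0 + acorr (seq_of N b) 0"
proof -
  let ?K = "int N"
  have "cnj (pseq N a u) * pseq N a u + cnj (pseq N b u) * pseq N b u
    = (\<Sum>j\<in>{-2*?K..2*?K}. acorr (seq_of N a) j * u powi j) + (\<Sum>j\<in>{-2*?K..2*?K}. acorr (seq_of N b) j * u powi j)"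
    using L1[OF seq_of_supp u, of N a] L1[OF seq_of_supp u, of N b] by (simp add: pseq_lpoly)
  also have "\<dots> = (\<Sum>j\<in>{-2*?K..2*?K}. (acorr (seq_of N a) j + acorr (seq_of N b) j) * u powi j)"
    by (simp add: sum.distrib distrib_right)
  also have "\<dots> = (\<Sum>j\<in>{-2*?K..2*?K}. if j = 0 then acorr (seq_of N a) 0 + acorr (seq_of N b) 0 else 0)"
    using assms(1) by (intro sum.cong refl) (auto simp: golay_pair_def)
  also have "\<dots> = acorr (seq_of N a) 0 + acorr (seq_of N b) 0" by simp
  finally show ?thesis .
qed

lemma rev_cnj_pseq:
  assumes w: "cmod w = 1"
  shows "pseq M (rev_cnj M c) w = w ^ (M - 1) * cnj (pseq M c w)"
proof -
  have w0: "w \<noteq> 0" using w by auto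
  have cw: "cnj w = inverse w" using unit_cnj[OF w] w0 by (metis inverse_unique mult.commute)
  have "pseq M (rev_cnj M c) w = (\<Sum>i<M. cnj (c (M - Suc i)) * w ^ (M - 1 - (M - Suc i)))"
    unfolding pseq_def rev_cnj_def by (intro sum.cong refl) (auto simp: Suc_diff_Suc)
  also have "\<dots> = (\<Sum>i<M. cnj (c i) * w ^ (M - 1 - i))"
    by (rule sum.nat_diff_reindex[where g = "\<lambda>i. cnj (c i) * w ^ (M - 1 - i)"])
  also have "\<dots> = (\<Sum>i<M. w ^ (M - 1) * (cnj (c i) * cnj w ^ i))"
  proof (intro sum.cong refl)
    fix i assume "i \<in> {..<M}"
    hence "i \<le> M - 1" by auto
    hence "w ^ (M - 1 - i) = w ^ (M - 1) / w ^ i" using w0 power_diff[of w i "M - 1"] by (simp del: One_nat_def)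
    thus "cnj (c i) * w ^ (M - 1 - i) = w ^ (M - 1) * (cnj (c i) * cnj w ^ i)"
      by (simp add: cw field_simps power_inverse)
  qed
  also have "\<dots> = w ^ (M - 1) * cnj (pseq M c w)"
    by (simp add: pseq_def sum_distrib_left)
  finally show ?thesis .
qed


theorem theorem1:
  fixes N M :: nat and a b c d :: "nat \<Rightarrow> complex"
    and \<xi>1 \<xi>2 :: complex and k l m :: int and f g :: "int \<Rightarrow> complex"
  assumes "N > 0" and "M > 0"
    and "golay_pair (seq_of N a) (seq_of N b)"
    and "golay_pair (seq_of M c) (seq_of M d)"
    and "cmod \<xi>1 = 1" and "cmod \<xi>2 = 1"
    and "fin_supp f" and "fin_supp g"
    and "\<forall>z. z \<noteq> 0 \<longrightarrow> lpoly f z =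
           \<xi>1 * pseq N a (z powi k) * pseq M c (z powi l)
         + \<xi>2 * pseq N b (z powi k) * pseq M d (z powi l) * z powi m"
    and "\<forall>z. z \<noteq> 0 \<longrightarrow> lpoly g z =
           \<xi>1 * pseq N a (z powi k) * pseq M (rev_cnj M d) (z powi l)
         - \<xi>2 * pseq N b (z powi k) * pseq M (rev_cnj M c) (z powi l) * z powi m"
  shows "golay_pair f g"
proof -
  define Ca where "Ca = acorr (seq_of N a) 0 + acorr (seq_of N b) 0"
  define Cc where "Cc = acorr (seq_of M c) 0 + acorr (seq_of M d) 0"
  have "finite (supp_seq f \<union> supp_seq g)" using assms(7,8) by (simp add: fin_supp_def)
  then obtain k0 where k0: "abs ` (supp_seq f \<union> supp_seq g) \<subseteq> {..<k0}"
    using finite_int_iff_bounded by blast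
  define K where "K = max k0 0"
  have K0: "K \<ge> 0" by (simp add: K_def)
  have sf: "supp_seq f \<subseteq> {-K..K}" and sg: "supp_seq g \<subseteq> {-K..K}"
    using k0 by (force simp: K_def)+
  define D where "D = {-(2*K)..2*K}"
  define e where "e = (\<lambda>j. acorr f j + acorr g j - (if j = 0 then Ca * Cc else 0))"
  have main: "(\<Sum>j\<in>D. e j * z powi j) = 0" if z: "cmod z = 1" for z
  proof -
    have z0: "z \<noteq> 0" using z by auto
    define A where "A = pseq N a (z powi k)"
    define B where "B = pseq N b (z powi k)"
    define C where "C = pseq M c (z powi l)"
    define Dd where "Dd = pseq M d (z powi l)"
    define u where "u = z powi m"
    define v where "v = (z powi l) ^ (M - 1)"
    have zk: "cmod (z powi k) = 1" and zl: "cmod (z powi l) = 1" and zm: "cmod u = 1"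
      using z by (simp_all add: norm_power_int u_def)
    have vv: "cmod v = 1" using zl by (simp add: v_def norm_power)
    have fz: "lpoly f z = \<xi>1*A*C + \<xi>2*B*Dd*u"
      using assms(9) z0 by (simp add: A_def B_def C_def Dd_def u_def)
    have gz: "lpoly g z = \<xi>1*A*(v*cnj Dd) - \<xi>2*B*(v*cnj C)*u"
      using assms(10) z0 rev_cnj_pseq[OF zl, of M c] rev_cnj_pseq[OF zl, of M d]
      by (simp add: A_def B_def C_def Dd_def u_def v_def)
    have "cnj (lpoly f z) * lpoly f z + cnj (lpoly g z) * lpoly g z
        = (cnj A*A + cnj B*B)*(cnj C*C+cnj Dd*Dd)"
      unfolding fz gz by (rule alg) (use assms(5,6) zm vv in \<open>simp_all add: unit_cnj\<close>)
    also have "\<dots> = Ca * Cc"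
      using golay_const[OF assms(3) zk] golay_const[OF assms(4) zl]
      by (simp add: A_def B_def C_def Dd_def Ca_def Cc_def)
    finally have 1: "cnj (lpoly f z) * lpoly f z + cnj (lpoly g z) * lpoly g z = Ca * Cc" .
    have "(\<Sum>j\<in>D. e j * z powi j) = (\<Sum>j\<in>D. acorr f j * z powi j) + (\<Sum>j\<in>D. acorr g j * z powi j)
        - (\<Sum>j\<in>D. (if j = 0 then Ca * Cc else 0))"
    proof -
      have "(\<Sum>j\<in>D. e j * z powi j) = (\<Sum>j\<in>D. acorr f j * z powi j + acorr g j * z powi j - (if j = 0 then Ca * Cc else 0))"
        by (intro sum.cong refl) (simp add: e_def algebra_simps)
      thus ?thesis by (simp only: sum.distrib sum_subtractf)
    qed
    also have "\<dots> = Ca * Cc - Ca * Cc"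
      using L1[OF sf z] L1[OF sg z] 1 K0 by (simp add: D_def)
    finally show ?thesis by simp
  qed
  show ?thesis unfolding golay_pair_def
  proof (intro allI impI)
    fix j :: int assume j: "j \<noteq> 0"
    show "acorr f j + acorr g j = 0"
    proof (cases "j \<in> D")
      case True
      have "e j = 0" using unique_coeffs[of e "2*K" j] main True by (simp add: D_def)
      thus ?thesis using j by (simp add: e_def)
    next
      case False
      thus ?thesis using acorr_out[OF sf, of j] acorr_out[OF sg, of j] by (simp add: D_def)
    qed
  qed
qed

end
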